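(* Let $Z$ be a topological space and $\ell>0$. Then there is a homeomorphism $\mathbb{P}^{\mathcal{G}}_{0,1}{\rm Glob}^{\mathcal{G}}_\ell(Z)\cong\mathcal{G}(1,\ell)\times Z$.
   Context: Work in $\mathbf{Top}$, the category of $\Delta$-generated spaces (or $\Delta$-Hausdorff $\Delta$-generated spaces), cartesian closed with internal hom ${\rm TOP}$ (the $\Delta$-kelleyfication of the compact-open topology); products are taken in $\mathbf{Top}$; subsets carry the $\Delta$-kelleyfication of the relative topology. $\mathcal{G}(\ell_1,\ell_2)$: set of nondecreasing homeomorphisms $[0,\ell_1]\to[0,\ell_2]$, as a subspace of ${\rm TOP}([0,\ell_1],[0,\ell_2])$. A multipointed $d$-space $X=(|X|,X^0,\mathbb{P}^{\mathcal{G}}X)$: a space, a subset of states, a set of continuous execution paths $[0,1]\to|X|$ with endpoints in $X^0$, stable under precomposition by $\mathcal{G}(1,1)$ and normalized composition. $\mathbb{P}^{\mathcal{G}}_{\alpha,\beta}X$, the set of execution paths from $\alpha$ to $\beta$, is a subspace of ${\rm TOP}([0,1],|X|)$. ${\rm Glob}^{\mathcal{G}}_\ell(Z)$: underlying space the quotient of $\{0,1\}\sqcup Z\times[0,\ell]$ identifying every $(z,0)$ with $0$ and every $(z,\ell)$ with $1$; states $\{0,1\}$; execution paths $\delta_z\circ\phi$ for $z\in Z$, $\phi\in\mathcal{G}(1,\ell)$, where $\delta_z(t)=(z,t)$. *)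

theory Defs
  imports "HOL-Analysis.Analysis" "HOL-Homology.Homology"
begin

definition delta_kelley :: "'a topology \<Rightarrow> 'a topology" where
  "delta_kelley X = topology (\<lambda>U. U \<subseteq> topspace X \<and>
     (\<forall>p f. singular_simplex p X f \<longrightarrow>
        openin (subtopology (powertop_real UNIV) (standard_simplex p))
               {x \<in> standard_simplex p. f x \<in> U}))"

definition delta_generated :: "'a topology \<Rightarrow> bool" where
  "delta_generated X \<longleftrightarrow> delta_kelley X = X"

text \<open>Binary product in Top: Delta-kelleyfication of the product topology.\<close>
definition dprod :: "'a topology \<Rightarrow> 'b topology \<Rightarrow> ('a \<times> 'b) topology" where
  "dprod X Y = delta_kelley (prod_topology X Y)"

text \<open>Subspace in Top: Delta-kelleyfication of the relative topology.\<close>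
definition dsub :: "'a topology \<Rightarrow> 'a set \<Rightarrow> 'a topology" where
  "dsub X S = delta_kelley (subtopology X S)"

text \<open>Compact-open topology on the set of continuous maps X \<rightarrow> Y; maps are represented
 extensionally (value undefined outside topspace X).\<close>
definition cmaps :: "'a topology \<Rightarrow> 'b topology \<Rightarrow> ('a \<Rightarrow> 'b) set" where
  "cmaps X Y = {f. continuous_map X Y f \<and> f \<in> extensional (topspace X)}"

definition compact_open :: "'a topology \<Rightarrow> 'b topology \<Rightarrow> ('a \<Rightarrow> 'b) topology" where
  "compact_open X Y = topology_generated_by
     (insert (cmaps X Y) {{f \<in> cmaps X Y. f ` K \<subseteq> U} | K U. compactin X K \<and> openin Y U})"

definition TOP :: "'a topology \<Rightarrow> 'b topology \<Rightarrow> ('a \<Rightarrow> 'b) topology" where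
  "TOP X Y = delta_kelley (compact_open X Y)"

definition interval_top :: "real \<Rightarrow> real topology" where
  "interval_top l = subtopology euclideanreal {0..l}"

definition Gset :: "real \<Rightarrow> real \<Rightarrow> (real \<Rightarrow> real) set" where
  "Gset l1 l2 = {f \<in> extensional {0..l1}. mono_on {0..l1} f \<and>
        homeomorphic_map (interval_top l1) (interval_top l2) f}"

definition Gsp :: "real \<Rightarrow> real \<Rightarrow> (real \<Rightarrow> real) topology" where
  "Gsp l1 l2 = dsub (TOP (interval_top l1) (interval_top l2)) (Gset l1 l2)"

definition disj_union :: "'a topology \<Rightarrow> 'b topology \<Rightarrow> ('a + 'b) topology" where
  "disj_union X Y = topology (\<lambda>U. U \<subseteq> Inl ` topspace X \<union> Inr ` topspace Y \<and>
      openin X {x \<in> topspace X. Inl x \<in> U} \<and> openin Y {y \<in> topspace Y. Inr y \<in> U})"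

definition quot_top :: "'a topology \<Rightarrow> ('a \<times> 'a) set \<Rightarrow> 'a set topology" where
  "quot_top X r = topology (\<lambda>V. V \<subseteq> topspace X // r \<and>
      openin X {x \<in> topspace X. r `` {x} \<in> V})"

text \<open>Source space {0,1} \<squnion> Z \<times> [0,l]; the state 0 is Inl False and 1 is Inl True.\<close>
definition glob_src :: "'a topology \<Rightarrow> real \<Rightarrow> (bool + 'a \<times> real) topology" where
  "glob_src Z l = disj_union (discrete_topology UNIV) (dprod Z (interval_top l))"

definition glob_rel :: "'a topology \<Rightarrow> real \<Rightarrow> ((bool + 'a \<times> real) \<times> (bool + 'a \<times> real)) set" where
  "glob_rel Z l = {(x, y). x \<in> topspace (glob_src Z l) \<and> y \<in> topspace (glob_src Z l) \<and>
      (x = y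
       \<or> ((x = Inl False \<or> (\<exists>z. x = Inr (z, 0))) \<and> (y = Inl False \<or> (\<exists>z. y = Inr (z, 0))))
       \<or> ((x = Inl True \<or> (\<exists>z. x = Inr (z, l))) \<and> (y = Inl True \<or> (\<exists>z. y = Inr (z, l)))))}"

definition glob_top :: "'a topology \<Rightarrow> real \<Rightarrow> (bool + 'a \<times> real) set topology" where
  "glob_top Z l = quot_top (glob_src Z l) (glob_rel Z l)"

definition glob_pt :: "'a topology \<Rightarrow> real \<Rightarrow> (bool + 'a \<times> real) \<Rightarrow> (bool + 'a \<times> real) set" where
  "glob_pt Z l x = glob_rel Z l `` {x}"

definition glob_delta :: "'a topology \<Rightarrow> real \<Rightarrow> 'a \<Rightarrow> real \<Rightarrow> (bool + 'a \<times> real) set" where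
  "glob_delta Z l z t = glob_pt Z l (Inr (z, t))"

definition glob_paths :: "'a topology \<Rightarrow> real \<Rightarrow> (real \<Rightarrow> (bool + 'a \<times> real) set) set" where
  "glob_paths Z l = {restrict (glob_delta Z l z \<circ> \<phi>) {0..1} | z \<phi>.
      z \<in> topspace Z \<and> \<phi> \<in> Gset 1 l}"

definition glob_paths_between ::
  "'a topology \<Rightarrow> real \<Rightarrow> (bool + 'a \<times> real) set \<Rightarrow> (bool + 'a \<times> real) set
     \<Rightarrow> (real \<Rightarrow> (bool + 'a \<times> real) set) topology" where
  "glob_paths_between Z l \<alpha> \<beta> = dsub (TOP (interval_top 1) (glob_top Z l))
      {\<gamma> \<in> glob_paths Z l. \<gamma> 0 = \<alpha> \<and> \<gamma> 1 = \<beta>}"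

end

theory Submission
  imports Defs
begin


abbreviation "SS p \<equiv> subtopology (powertop_real UNIV) (standard_simplex p)"

lemma istopologyI:
  assumes "\<And>S T. P S \<Longrightarrow> P T \<Longrightarrow> P (S \<inter> T)" "\<And>K. (\<And>S. S \<in> K \<Longrightarrow> P S) \<Longrightarrow> P (\<Union>K)"
  shows "istopology P"
  using assms unfolding istopology_def by blast

lemma istopology_dk:
  "istopology (\<lambda>U. U \<subseteq> topspace X \<and>
     (\<forall>p f. singular_simplex p X f \<longrightarrow>
        openin (SS p) {x \<in> standard_simplex p. f x \<in> U}))"
proof (rule istopologyI)
  fix S T assume S: "S \<subseteq> topspace X \<and> (\<forall>p f. singular_simplex p X f \<longrightarrow>
        openin (SS p) {x \<in> standard_simplex p. f x \<in> S})"
    and T: "T \<subseteq> topspace X \<and> (\<forall>p f. singular_simplex p X f \<longrightarrow>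
        openin (SS p) {x \<in> standard_simplex p. f x \<in> T})"
  show "S \<inter> T \<subseteq> topspace X \<and> (\<forall>p f. singular_simplex p X f \<longrightarrow>
        openin (SS p) {x \<in> standard_simplex p. f x \<in> S \<inter> T})"
  proof (intro conjI allI impI)
    fix p f assume "singular_simplex p X f"
    then have "openin (SS p) ({x \<in> standard_simplex p. f x \<in> S} \<inter> {x \<in> standard_simplex p. f x \<in> T})"
      using S T by blast
    moreover have "{x \<in> standard_simplex p. f x \<in> S \<inter> T} = {x \<in> standard_simplex p. f x \<in> S} \<inter> {x \<in> standard_simplex p. f x \<in> T}" by blast
    ultimately show "openin (SS p) {x \<in> standard_simplex p. f x \<in> S \<inter> T}" by simp
  qed (use S in auto)
next
  fix K assume K: "\<And>S. S\<in>K \<Longrightarrow> S \<subseteq> topspace X \<and> (\<forall>p f. singular_simplex p X f \<longrightarrow>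
        openin (SS p) {x \<in> standard_simplex p. f x \<in> S})"
  show "\<Union>K \<subseteq> topspace X \<and> (\<forall>p f. singular_simplex p X f \<longrightarrow>
        openin (SS p) {x \<in> standard_simplex p. f x \<in> \<Union>K})"
  proof (intro conjI allI impI)
    fix p f assume "singular_simplex p X f"
    then have "openin (SS p) (\<Union>S\<in>K. {x \<in> standard_simplex p. f x \<in> S})"
      using K by (intro openin_Union) blast
    moreover have "{x \<in> standard_simplex p. f x \<in> \<Union>K} = (\<Union>S\<in>K. {x \<in> standard_simplex p. f x \<in> S})" by blast
    ultimately show "openin (SS p) {x \<in> standard_simplex p. f x \<in> \<Union>K}" by simp
  qed (use K in blast)
qed

lemma openin_dk:
  "openin (delta_kelley X) U \<longleftrightarrow> U \<subseteq> topspace X \<and>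
     (\<forall>p f. singular_simplex p X f \<longrightarrow>
        openin (SS p) {x \<in> standard_simplex p. f x \<in> U})"
  unfolding delta_kelley_def by (simp add: topology_inverse'[OF istopology_dk])

lemma openin_imp_dk: "openin X U \<Longrightarrow> openin (delta_kelley X) U"
  unfolding openin_dk
proof (auto simp: singular_simplex_def openin_subset)
  fix p f assume "openin X U" "continuous_map (SS p) X f"
  then show "openin (SS p) {x \<in> standard_simplex p. f x \<in> U}"
    using continuous_map_def[of "SS p" X f] by auto
qed

lemma topspace_dk[simp]: "topspace (delta_kelley X) = topspace X"
proof
  show "topspace (delta_kelley X) \<subseteq> topspace X"
    by (metis openin_dk openin_topspace)
  show "topspace X \<subseteq> topspace (delta_kelley X)"
    by (simp add: openin_imp_dk openin_subset)
qed

lemma cont_from_dk: "continuous_map X Y f \<Longrightarrow> continuous_map (delta_kelley X) Y f"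
  unfolding continuous_map_def by (auto intro: openin_imp_dk)

lemma cont_to_dk_imp:
  assumes c: "continuous_map W (delta_kelley X) f"
  shows "continuous_map W X f"
  unfolding continuous_map_def
proof (intro conjI allI impI)
  show "f \<in> topspace W \<rightarrow> topspace X" using c by (metis continuous_map_def topspace_dk)
  fix U assume "openin X U"
  then have "openin (delta_kelley X) U" by (rule openin_imp_dk)
  then show "openin W {x \<in> topspace W. f x \<in> U}" using c by (simp add: openin_continuous_map_preimage)
qed

lemma cont_simplex_dk:
  assumes "continuous_map (SS p) X f"
  shows "continuous_map (SS p) (delta_kelley X) f"
  unfolding continuous_map_def
proof (intro conjI allI impI)
  show "f \<in> topspace (SS p) \<rightarrow> topspace (delta_kelley X)"
    using assms by (metis continuous_map_def topspace_dk)
  fix U assume "openin (delta_kelley X) U"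
  moreover have "singular_simplex p X (restrict f (standard_simplex p))"
    using assms by (simp add: singular_simplex_def)
  ultimately have "openin (SS p) {x \<in> standard_simplex p. restrict f (standard_simplex p) x \<in> U}"
    unfolding openin_dk by blast
  moreover have "{x \<in> standard_simplex p. restrict f (standard_simplex p) x \<in> U} = {x \<in> topspace (SS p). f x \<in> U}"
    by auto
  ultimately show "openin (SS p) {x \<in> topspace (SS p). f x \<in> U}" by simp
qed

lemma cont_dk_simplex_iff:
  "continuous_map (SS p) (delta_kelley X) f \<longleftrightarrow> continuous_map (SS p) X f"
  using cont_to_dk_imp cont_simplex_dk by blast

lemma dk_cont:
  assumes "\<And>p \<sigma>. singular_simplex p X \<sigma> \<Longrightarrow> continuous_map (SS p) Y (f \<circ> \<sigma>)"
  shows "continuous_map (delta_kelley X) (delta_kelley Y) f"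
  unfolding continuous_map_def
proof (intro conjI allI impI Pi_I)
  fix x assume x: "x \<in> topspace (delta_kelley X)"
  define e where "e = (\<lambda>j::nat. if j = 0 then 1 else (0::real))"
  have e: "e \<in> standard_simplex 0" by (simp add: e_def)
  have "singular_simplex 0 X (restrict (\<lambda>_. x) (standard_simplex 0))"
    using x by (simp add: singular_simplex_def)
  then have "continuous_map (SS 0) Y (f \<circ> restrict (\<lambda>_. x) (standard_simplex 0))"
    by (rule assms)
  then have "f x \<in> topspace Y"
    using e unfolding continuous_map_def by (auto simp: Pi_iff)
  then show "f x \<in> topspace (delta_kelley Y)" by simp
next
  fix U assume U: "openin (delta_kelley Y) U"
  show "openin (delta_kelley X) {x \<in> topspace (delta_kelley X). f x \<in> U}"
    unfolding openin_dk
  proof (intro conjI allI impI)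
    fix p \<sigma> assume s: "singular_simplex p X \<sigma>"
    then have "singular_simplex p Y (restrict (f \<circ> \<sigma>) (standard_simplex p))"
      using assms by (simp add: singular_simplex_def)
    then have "openin (SS p) {x \<in> standard_simplex p. restrict (f \<circ> \<sigma>) (standard_simplex p) x \<in> U}"
      using U unfolding openin_dk by blast
    moreover have "{x \<in> standard_simplex p. restrict (f \<circ> \<sigma>) (standard_simplex p) x \<in> U}
       = {x \<in> standard_simplex p. \<sigma> x \<in> {x \<in> topspace (delta_kelley X). f x \<in> U}}"
      using s by (auto simp: singular_simplex_def continuous_map_def)
    ultimately show "openin (SS p) {x \<in> standard_simplex p. \<sigma> x \<in> {x \<in> topspace (delta_kelley X). f x \<in> U}}"
      by simp
  qed auto
qed

lemma dk_homeo:
  assumes "\<And>p \<sigma>. singular_simplex p X \<sigma> \<Longrightarrow> continuous_map (SS p) Y (f \<circ> \<sigma>)"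
    and "\<And>p \<sigma>. singular_simplex p Y \<sigma> \<Longrightarrow> continuous_map (SS p) X (g \<circ> \<sigma>)"
    and "\<And>x. x \<in> topspace X \<Longrightarrow> g (f x) = x"
    and "\<And>y. y \<in> topspace Y \<Longrightarrow> f (g y) = y"
  shows "delta_kelley X homeomorphic_space delta_kelley Y"
  unfolding homeomorphic_space_def homeomorphic_maps_def
proof (intro exI conjI)
  show "continuous_map (delta_kelley X) (delta_kelley Y) f" using assms(1) by (rule dk_cont)
  show "continuous_map (delta_kelley Y) (delta_kelley X) g" using assms(2) by (rule dk_cont)
qed (use assms in auto)



lemma cont_into_generated:
  assumes "\<And>x. x \<in> topspace X \<Longrightarrow> f x \<in> \<Union>B"
    and "\<And>b. b \<in> B \<Longrightarrow> openin X {x \<in> topspace X. f x \<in> b}"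
  shows "continuous_map X (topology_generated_by B) f"
  unfolding continuous_map_def
proof (intro conjI allI impI Pi_I)
  fix x assume "x \<in> topspace X" then show "f x \<in> topspace (topology_generated_by B)"
    using assms(1) by simp
next
  fix U assume "openin (topology_generated_by B) U"
  then have "generate_topology_on B U" by (simp add: openin_topology_generated_by_iff)
  then show "openin X {x \<in> topspace X. f x \<in> U}"
  proof induction
    case Empty then show ?case by simp
  next
    case (Int a b)
    have "{x \<in> topspace X. f x \<in> a \<inter> b} = {x \<in> topspace X. f x \<in> a} \<inter> {x \<in> topspace X. f x \<in> b}" by blast
    then show ?case using Int by (simp add: openin_Int)
  next
    case (UN K)
    have "{x \<in> topspace X. f x \<in> \<Union>K} = (\<Union>k\<in>K. {x \<in> topspace X. f x \<in> k})" by blast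
    show ?case unfolding \<open>{x \<in> topspace X. f x \<in> \<Union>K} = (\<Union>k\<in>K. {x \<in> topspace X. f x \<in> k})\<close>
      using UN by (intro openin_Union) auto
  next
    case (Basis s) then show ?case using assms(2) by blast
  qed
qed

lemma topspace_compact_open[simp]: "topspace (compact_open X Y) = cmaps X Y"
  unfolding compact_open_def by auto

lemma openin_compact_open_basic:
  "compactin X K \<Longrightarrow> openin Y U \<Longrightarrow> openin (compact_open X Y) {f \<in> cmaps X Y. f ` K \<subseteq> U}"
  unfolding compact_open_def by (rule topology_generated_by_Basis) blast

abbreviation "I1 \<equiv> interval_top 1"

lemma topspace_interval_top[simp]: "topspace (interval_top l) = {0..l}"
  by (simp add: interval_top_def)

lemma slice_cont:
  assumes H: "continuous_map (prod_topology P Q) Y H" and s: "s \<in> topspace P"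
  shows "continuous_map Q Y (\<lambda>t. H (s,t))"
proof -
  have "continuous_map Q (prod_topology P Q) (\<lambda>t. (s,t))"
    using s by (intro continuous_map_pairedI) (simp_all add: continuous_map_id)
  from continuous_map_compose[OF this H] show ?thesis by (simp add: o_def)
qed

lemma curry_cont:
  assumes H: "continuous_map (prod_topology P I1) Y H"
  shows "continuous_map P (compact_open I1 Y) (\<lambda>s. restrict (\<lambda>t. H (s,t)) {0..1})"
  unfolding compact_open_def
proof (rule cont_into_generated)
  fix s assume s: "s \<in> topspace P"
  have "continuous_map I1 Y (\<lambda>t. H (s,t))"
    using H s by (rule slice_cont)
  then have "continuous_map I1 Y (restrict (\<lambda>t. H (s,t)) {0..1})"
    by (rule continuous_map_eq) auto
  then have "restrict (\<lambda>t. H (s,t)) {0..1} \<in> cmaps I1 Y"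
    by (simp add: cmaps_def)
  then show "restrict (\<lambda>t. H (s,t)) {0..1} \<in> \<Union>(insert (cmaps I1 Y) {{f \<in> cmaps I1 Y. f ` K \<subseteq> U} | K U. compactin I1 K \<and> openin Y U})"
    by blast
  note this
next
  have cm: "\<And>s. s \<in> topspace P \<Longrightarrow> restrict (\<lambda>t. H (s,t)) {0..1} \<in> cmaps I1 Y"
  proof -
    fix s assume s: "s \<in> topspace P"
    have "continuous_map I1 Y (\<lambda>t. H (s,t))"
      using H s by (rule slice_cont)
    then have "continuous_map I1 Y (restrict (\<lambda>t. H (s,t)) {0..1})"
      by (rule continuous_map_eq) auto
    then show "restrict (\<lambda>t. H (s,t)) {0..1} \<in> cmaps I1 Y"
      by (simp add: cmaps_def)
  qed
  fix b assume "b \<in> insert (cmaps I1 Y) {{f \<in> cmaps I1 Y. f ` K \<subseteq> U} | K U. compactin I1 K \<and> openin Y U}"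
  then consider "b = cmaps I1 Y" | K U where "b = {f \<in> cmaps I1 Y. f ` K \<subseteq> U}" "compactin I1 K" "openin Y U"
    by blast
  then show "openin P {x \<in> topspace P. restrict (\<lambda>t. H (x,t)) {0..1} \<in> b}"
  proof cases
    case 1
    have "{x \<in> topspace P. restrict (\<lambda>t. H (x,t)) {0..1} \<in> b} = topspace P" unfolding 1 using cm by auto
    then show ?thesis by simp
  next
    case 2
    have K01: "K \<subseteq> {0..1}" using compactin_subset_topspace[OF 2(2)] by simp
    define W where "W = {x \<in> topspace (prod_topology P I1). H x \<in> U}"
    have W: "openin (prod_topology P I1) W"
      unfolding W_def by (rule openin_continuous_map_preimage[OF H 2(3)])
    show ?thesis
    proof (subst openin_subopen, intro ballI)
      fix s0 assume s0: "s0 \<in> {x \<in> topspace P. restrict (\<lambda>t. H (x,t)) {0..1} \<in> b}"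
      have img: "restrict (\<lambda>t. H (s0,t)) {0..1} ` K \<subseteq> U" and s0P: "s0 \<in> topspace P"
        using s0 2(1) by auto
      have sK: "{s0} \<times> K \<subseteq> W"
      proof
        fix y assume "y \<in> {s0} \<times> K"
        then obtain t where t: "y = (s0,t)" "t \<in> K" by blast
        then have t01: "t \<in> {0..1}" using K01 by blast
        have "restrict (\<lambda>t. H (s0,t)) {0..1} t \<in> U" using img t(2) by blast
        then have "H (s0,t) \<in> U" using t01 by simp
        then show "y \<in> W" unfolding W_def using t t01 s0P by simp
      qed
      obtain U' V where UV: "openin P U'" "openin I1 V" "s0 \<in> U'" "K \<subseteq> V" "U' \<times> V \<subseteq> W"
        using tube_lemma_right[OF W 2(2) s0P sK] by blast
      have "U' \<subseteq> {x \<in> topspace P. restrict (\<lambda>t. H (x,t)) {0..1} \<in> b}"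
      proof
        fix s assume s: "s \<in> U'"
        then have sP: "s \<in> topspace P" using UV(1) openin_subset by blast
        have "restrict (\<lambda>t. H (s,t)) {0..1} t \<in> U" if "t \<in> K" for t
        proof -
          have "(s,t) \<in> W" using UV(4,5) s that by blast
          then have "H (s,t) \<in> U" unfolding W_def by simp
          then show ?thesis using that K01 by auto
        qed
        then have "restrict (\<lambda>t. H (s,t)) {0..1} ` K \<subseteq> U" by blast
        then show "s \<in> {x \<in> topspace P. restrict (\<lambda>t. H (x,t)) {0..1} \<in> b}"
          using sP cm[OF sP] 2(1) by simp
      qed
      then show "\<exists>T. openin P T \<and> s0 \<in> T \<and> T \<subseteq> {x \<in> topspace P. restrict (\<lambda>t. H (x,t)) {0..1} \<in> b}"
        using UV by blast
    qed
  qed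
qed



lemma cmaps_cont: "g \<in> cmaps X Y \<Longrightarrow> continuous_map X Y g"
  by (simp add: cmaps_def)

lemma cm_pt: "continuous_map X Y f \<Longrightarrow> x \<in> topspace X \<Longrightarrow> f x \<in> topspace Y"
  unfolding continuous_map_def by blast

lemma uncurry_cont:
  assumes \<sigma>: "continuous_map P (compact_open I1 Y) \<sigma>"
  shows "continuous_map (prod_topology P I1) Y (\<lambda>(s,t). \<sigma> s t)"
  unfolding continuous_map_def
proof (intro conjI allI impI Pi_I)
  fix x assume "x \<in> topspace (prod_topology P I1)"
  then obtain s t where x: "x = (s,t)" "s \<in> topspace P" "t \<in> {0..1}" by auto
  then have "\<sigma> s \<in> cmaps I1 Y" using cm_pt[OF \<sigma> x(2)] by simp
  then have "\<sigma> s t \<in> topspace Y" using cm_pt[OF cmaps_cont, of "\<sigma> s" I1 Y t] x(3) by simp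
  then show "(\<lambda>(s,t). \<sigma> s t) x \<in> topspace Y" using x(1) by simp
next
  fix U assume U: "openin Y U"
  let ?S = "{x \<in> topspace (prod_topology P I1). (\<lambda>(s,t). \<sigma> s t) x \<in> U}"
  show "openin (prod_topology P I1) ?S"
  proof (subst openin_subopen, intro ballI)
    fix x assume "x \<in> ?S"
    then obtain s0 t0 where x: "x = (s0,t0)" "s0 \<in> topspace P" "t0 \<in> {0..1}" "\<sigma> s0 t0 \<in> U" by auto
    have fc: "\<sigma> s0 \<in> cmaps I1 Y" using cm_pt[OF \<sigma> x(2)] by simp
    then have "openin I1 {t \<in> topspace I1. \<sigma> s0 t \<in> U}"
      using U cmaps_cont openin_continuous_map_preimage by blast
    then have "openin (top_of_set {0..1}) {t \<in> {0..1}. \<sigma> s0 t \<in> U}"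
      by (simp add: interval_top_def)
    then obtain e where e: "e > 0" "\<And>t'. t' \<in> {0..1} \<Longrightarrow> dist t' t0 < e \<Longrightarrow> \<sigma> s0 t' \<in> U"
      unfolding openin_euclidean_subtopology_iff using x by blast
    define K where "K = {max 0 (t0 - e/2) .. min 1 (t0 + e/2)}"
    have K01: "K \<subseteq> {0..1}" unfolding K_def by auto
    have Kc: "compactin I1 K" unfolding interval_top_def compactin_subtopology
      using K01 by (simp add: K_def)
    have fK: "\<sigma> s0 ` K \<subseteq> U"
    proof
      fix y assume "y \<in> \<sigma> s0 ` K"
      then obtain t where t: "t \<in> K" "y = \<sigma> s0 t" by blast
      then have "dist t t0 < e" using e(1) unfolding K_def dist_real_def by auto
      then show "y \<in> U" using e(2) t K01 by blast
    qed
    define N where "N = {s \<in> topspace P. \<sigma> s \<in> {g \<in> cmaps I1 Y. g ` K \<subseteq> U}}"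
    have N: "openin P N" unfolding N_def
      by (rule openin_continuous_map_preimage[OF \<sigma> openin_compact_open_basic[OF Kc U]])
    define T where "T = N \<times> ({0..1} \<inter> ball t0 (e/2))"
    have "openin I1 ({0..1} \<inter> ball t0 (e/2))"
      unfolding interval_top_def openin_open by blast
    then have T: "openin (prod_topology P I1) T" unfolding T_def using N
      by (simp add: openin_prod_Times_iff)
    have xT: "x \<in> T" using x fc fK e(1) unfolding T_def N_def by auto
    have "T \<subseteq> ?S"
    proof
      fix y assume "y \<in> T"
      then obtain s t where y: "y = (s,t)" "s \<in> N" "t \<in> {0..1}" "dist t0 t < e/2"
        unfolding T_def by auto
      have "\<bar>t0 - t\<bar> < e/2" using y(4) by (simp add: dist_real_def)
      then have "t0 - e/2 \<le> t" "t \<le> t0 + e/2" by arith+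
      then have "t \<in> K" unfolding K_def using y(3) by simp
      then show "y \<in> ?S" using y unfolding N_def by auto
    qed
    then show "\<exists>T. openin (prod_topology P I1) T \<and> x \<in> T \<and> T \<subseteq> ?S"
      using T xT by blast
  qed
qed



definition prism_map :: "nat \<Rightarrow> (nat \<Rightarrow> real) \<Rightarrow> (nat \<Rightarrow> real) \<times> real" where
  "prism_map p x = ((\<lambda>i. if i \<le> p then x i + x (i + Suc p) else 0), (\<Sum>i = Suc p..p + Suc p. x i))"

lemma sum_shift_Suc: "(\<Sum>i = Suc p..p + Suc p. f i) = (\<Sum>i\<le>p. f (i + Suc p))"
proof -
  have "(\<Sum>i = 0 + Suc p..p + Suc p. f i) = (\<Sum>i = 0..p. f (i + Suc p))"
    by (rule sum.shift_bounds_cl_nat_ivl)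
  then show ?thesis by (simp add: atLeast0AtMost)
qed

lemma prism_map_in:
  assumes x: "x \<in> standard_simplex (p + Suc p)"
  shows "prism_map p x \<in> standard_simplex p \<times> {0..1}"
proof -
  have x0: "\<And>i. 0 \<le> x i" and x1: "\<And>i. x i \<le> 1" and xz: "\<And>i. i > p + Suc p \<Longrightarrow> x i = 0"
    and xs: "(\<Sum>i\<le>p + Suc p. x i) = 1"
    using x by (auto simp: standard_simplex_def)
  have split: "(\<Sum>i\<le>p. x i) + (\<Sum>i = Suc p..p + Suc p. x i) = 1"
    using xs sum_up_index_split[of x p "Suc p"] by simp
  have A: "0 \<le> (\<Sum>i\<le>p. x i)" "0 \<le> (\<Sum>i = Suc p..p + Suc p. x i)"
    by (rule sum_nonneg, rule x0)+
  have "x i + x (i + Suc p) \<le> 1" if "i \<le> p" for i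
  proof -
    have "x i \<le> (\<Sum>i\<le>p. x i)" using that x0 by (intro member_le_sum) auto
    moreover have "x (i + Suc p) \<le> (\<Sum>i = Suc p..p + Suc p. x i)" using that x0 by (intro member_le_sum) auto
    ultimately show ?thesis using split by linarith
  qed
  moreover have "(\<Sum>i\<le>p. (if i \<le> p then x i + x (i + Suc p) else 0)) = 1"
  proof -
    have e1: "(\<Sum>i\<le>p. (if i \<le> p then x i + x (i + Suc p) else 0)) = (\<Sum>i\<le>p. x i) + (\<Sum>i\<le>p. x (i + Suc p))"
      by (simp add: sum.distrib)
    show ?thesis using e1 split unfolding sum_shift_Suc by linarith
  qed
  ultimately show ?thesis using x0 A split unfolding prism_map_def standard_simplex_def
    by (auto intro: add_nonneg_nonneg)
qed

lemma prism_map_surj: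
  assumes s: "s \<in> standard_simplex p" and t: "t \<in> {0..1::real}"
  shows "(s,t) \<in> prism_map p ` standard_simplex (p + Suc p)"
proof -
  define x where "x = (\<lambda>i. if i \<le> p then s i * (1 - t) else if i \<le> p + Suc p then s (i - Suc p) * t else 0)"
  have s0: "\<And>i. 0 \<le> s i" and s1: "\<And>i. s i \<le> 1" and sz: "\<And>i. i > p \<Longrightarrow> s i = 0"
    and ss: "(\<Sum>i\<le>p. s i) = 1"
    using s by (auto simp: standard_simplex_def)
  have up: "(\<Sum>i = Suc p..p + Suc p. x i) = t"
  proof -
    have "(\<Sum>i = Suc p..p + Suc p. x i) = (\<Sum>i\<le>p. x (i + Suc p))" by (rule sum_shift_Suc)
    also have "\<dots> = (\<Sum>i\<le>p. s i * t)" unfolding x_def by (intro sum.cong) auto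
    also have "\<dots> = t" using ss by (simp add: sum_distrib_right[symmetric])
    finally show ?thesis .
  qed
  have "x \<in> standard_simplex (p + Suc p)"
  proof -
    have "0 \<le> x i \<and> x i \<le> 1" for i
      using s0[of i] s1[of i] s0[of "i - Suc p"] s1[of "i - Suc p"] t unfolding x_def
      by (auto intro: mult_le_one mult_nonneg_nonneg)
    moreover have "(\<Sum>i\<le>p. x i) = 1 - t"
    proof -
      have "(\<Sum>i\<le>p. x i) = (\<Sum>i\<le>p. s i * (1 - t))" unfolding x_def by (intro sum.cong) auto
      then show ?thesis using ss by (simp add: sum_distrib_right[symmetric])
    qed
    ultimately show ?thesis using up sum_up_index_split[of x p "Suc p"]
      unfolding standard_simplex_def by (auto simp: x_def)
  qed
  moreover have "prism_map p x = (s,t)"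
  proof -
    have "(\<lambda>i. if i \<le> p then x i + x (i + Suc p) else 0) = s"
    proof
      fix i show "(if i \<le> p then x i + x (i + Suc p) else 0) = s i"
        using sz[of i] by (auto simp: x_def algebra_simps)
    qed
    then show ?thesis using up by (simp add: prism_map_def)
  qed
  ultimately show ?thesis by (metis image_eqI)
qed

lemma prism_map_cont:
  "continuous_map (SS (p + Suc p)) (prod_topology (SS p) I1) (prism_map p)"
proof -
  have proj: "continuous_map (SS (p + Suc p)) euclideanreal (\<lambda>x. x i)" for i
    by (rule continuous_map_from_subtopology) (rule continuous_map_product_projection; simp)
  have c1: "continuous_map (SS (p + Suc p)) (powertop_real UNIV) (\<lambda>x i. if i \<le> p then x i + x (i + Suc p) else 0)"
    unfolding continuous_map_componentwise_UNIV
  proof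
    fix k show "continuous_map (SS (p + Suc p)) euclideanreal (\<lambda>x. if k \<le> p then x k + x (k + Suc p) else 0)"
      using continuous_map_add[OF proj[of k] proj[of "k + Suc p"]] by (cases "k \<le> p") auto
  qed
  have c2: "continuous_map (SS (p + Suc p)) euclideanreal (\<lambda>x. \<Sum>i = Suc p..p + Suc p. x i)"
    by (intro continuous_map_sum proj) auto
  have "continuous_map (SS (p + Suc p)) (prod_topology (powertop_real UNIV) euclideanreal) (prism_map p)"
    unfolding prism_map_def using c1 c2 by (intro continuous_map_pairedI)
  then show ?thesis
    unfolding interval_top_def subtopology_Times[symmetric]
    using prism_map_in by (intro continuous_map_into_subtopology) auto
qed

lemma prism_quotient:
  "quotient_map (SS (p + Suc p)) (prod_topology (SS p) I1) (prism_map p)"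
proof (rule continuous_imp_quotient_map[OF prism_map_cont])
  show "compact_space (SS (p + Suc p))"
    by (simp add: compact_space_subtopology compactin_standard_simplex)
  show "Hausdorff_space (prod_topology (SS p) I1)"
    unfolding Hausdorff_space_prod_topology interval_top_def
    by (simp add: Hausdorff_space_subtopology Hausdorff_space_product_topology)
  have "prism_map p ` standard_simplex (p + Suc p) \<subseteq> standard_simplex p \<times> {0..1}"
    using prism_map_in by blast
  moreover have "standard_simplex p \<times> {0..1} \<subseteq> prism_map p ` standard_simplex (p + Suc p)"
    using prism_map_surj by blast
  ultimately show "prism_map p ` topspace (SS (p + Suc p)) = topspace (prod_topology (SS p) I1)"
    by simp
qed

lemma prism_dk:
  assumes g: "continuous_map (prod_topology (SS p) I1) X g"
  shows "continuous_map (prod_topology (SS p) I1) (delta_kelley X) g"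
  unfolding continuous_map_def
proof (intro conjI allI impI)
  show "g \<in> topspace (prod_topology (SS p) I1) \<rightarrow> topspace (delta_kelley X)"
    using g by (simp add: continuous_map_def)
next
  fix U assume U: "openin (delta_kelley X) U"
  let ?W = "prod_topology (SS p) I1"
  let ?G = "{w \<in> topspace ?W. g w \<in> U}"
  have q: "quotient_map (SS (p + Suc p)) ?W (prism_map p)" by (rule prism_quotient)
  have "singular_simplex (p + Suc p) X (restrict (g \<circ> prism_map p) (standard_simplex (p + Suc p)))"
    unfolding singular_simplex_def
    using continuous_map_compose[OF prism_map_cont g] by (auto intro: continuous_map_eq)
  then have "openin (SS (p + Suc p)) {x \<in> standard_simplex (p + Suc p). restrict (g \<circ> prism_map p) (standard_simplex (p + Suc p)) x \<in> U}"
    using U unfolding openin_dk by blast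
  moreover have "{x \<in> standard_simplex (p + Suc p). restrict (g \<circ> prism_map p) (standard_simplex (p + Suc p)) x \<in> U}
      = {x \<in> topspace (SS (p + Suc p)). prism_map p x \<in> ?G}"
    using prism_map_in by (auto simp: interval_top_def)
  moreover have "?G \<subseteq> topspace ?W" by blast
  then have "openin ?W ?G \<longleftrightarrow> openin (SS (p + Suc p)) {x \<in> topspace (SS (p + Suc p)). prism_map p x \<in> ?G}"
    using q unfolding quotient_map_def by blast
  ultimately show "openin ?W ?G" by simp
qed



lemma istopology_disj:
  "istopology (\<lambda>U. U \<subseteq> Inl ` topspace X \<union> Inr ` topspace Y \<and>
      openin X {x \<in> topspace X. Inl x \<in> U} \<and> openin Y {y \<in> topspace Y. Inr y \<in> U})"
proof (rule istopologyI)
  fix S T :: "('a + 'b) set"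
  assume S: "S \<subseteq> Inl ` topspace X \<union> Inr ` topspace Y \<and>
      openin X {x \<in> topspace X. Inl x \<in> S} \<and> openin Y {y \<in> topspace Y. Inr y \<in> S}"
    and T: "T \<subseteq> Inl ` topspace X \<union> Inr ` topspace Y \<and>
      openin X {x \<in> topspace X. Inl x \<in> T} \<and> openin Y {y \<in> topspace Y. Inr y \<in> T}"
  have e1: "{x \<in> topspace X. Inl x \<in> S \<inter> T} = {x \<in> topspace X. Inl x \<in> S} \<inter> {x \<in> topspace X. Inl x \<in> T}" by blast
  have e2: "{x \<in> topspace Y. Inr x \<in> S \<inter> T} = {x \<in> topspace Y. Inr x \<in> S} \<inter> {x \<in> topspace Y. Inr x \<in> T}" by blast
  show "S \<inter> T \<subseteq> Inl ` topspace X \<union> Inr ` topspace Y \<and>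
      openin X {x \<in> topspace X. Inl x \<in> S \<inter> T} \<and> openin Y {y \<in> topspace Y. Inr y \<in> S \<inter> T}"
    unfolding e1 e2 using S T by (intro conjI openin_Int) blast+
next
  fix K :: "('a + 'b) set set"
  assume K: "\<And>S. S \<in> K \<Longrightarrow> S \<subseteq> Inl ` topspace X \<union> Inr ` topspace Y \<and>
      openin X {x \<in> topspace X. Inl x \<in> S} \<and> openin Y {y \<in> topspace Y. Inr y \<in> S}"
  have e1: "{x \<in> topspace X. Inl x \<in> \<Union>K} = (\<Union>S\<in>K. {x \<in> topspace X. Inl x \<in> S})" by blast
  have e2: "{x \<in> topspace Y. Inr x \<in> \<Union>K} = (\<Union>S\<in>K. {x \<in> topspace Y. Inr x \<in> S})" by blast
  show "\<Union>K \<subseteq> Inl ` topspace X \<union> Inr ` topspace Y \<and>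
      openin X {x \<in> topspace X. Inl x \<in> \<Union>K} \<and> openin Y {y \<in> topspace Y. Inr y \<in> \<Union>K}"
    unfolding e1 e2 using K by (intro conjI openin_Union) blast+
qed

lemma openin_disj:
  "openin (disj_union X Y) U \<longleftrightarrow> U \<subseteq> Inl ` topspace X \<union> Inr ` topspace Y \<and>
      openin X {x \<in> topspace X. Inl x \<in> U} \<and> openin Y {y \<in> topspace Y. Inr y \<in> U}"
  unfolding disj_union_def by (simp add: topology_inverse'[OF istopology_disj])

lemma topspace_disj: "topspace (disj_union X Y) = Inl ` topspace X \<union> Inr ` topspace Y"
proof
  show "topspace (disj_union X Y) \<subseteq> Inl ` topspace X \<union> Inr ` topspace Y"
    by (metis openin_disj openin_topspace)
  have "openin (disj_union X Y) (Inl ` topspace X \<union> Inr ` topspace Y)"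
    unfolding openin_disj
  proof (intro conjI)
    have "{x \<in> topspace X. Inl x \<in> Inl ` topspace X \<union> Inr ` topspace Y} = topspace X" by blast
    then show "openin X {x \<in> topspace X. Inl x \<in> Inl ` topspace X \<union> Inr ` topspace Y}" by simp
    have "{x \<in> topspace Y. Inr x \<in> Inl ` topspace X \<union> Inr ` topspace Y} = topspace Y" by blast
    then show "openin Y {x \<in> topspace Y. Inr x \<in> Inl ` topspace X \<union> Inr ` topspace Y}" by simp
  qed simp
  then show "Inl ` topspace X \<union> Inr ` topspace Y \<subseteq> topspace (disj_union X Y)"
    by (rule openin_subset)
qed

lemma cont_Inr: "continuous_map Y (disj_union X Y) Inr"
  unfolding continuous_map_def
proof (intro conjI allI impI Pi_I)
  fix y assume "y \<in> topspace Y" then show "Inr y \<in> topspace (disj_union X Y)"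
    by (simp add: topspace_disj)
next
  fix U assume "openin (disj_union X Y) U"
  then show "openin Y {y \<in> topspace Y. Inr y \<in> U}" unfolding openin_disj by blast
qed

lemma istopology_quot:
  "istopology (\<lambda>V. V \<subseteq> topspace X // r \<and> openin X {x \<in> topspace X. r `` {x} \<in> V})"
proof (rule istopologyI)
  fix S T assume S: "S \<subseteq> topspace X // r \<and> openin X {x \<in> topspace X. r `` {x} \<in> S}"
    and T: "T \<subseteq> topspace X // r \<and> openin X {x \<in> topspace X. r `` {x} \<in> T}"
  have e: "{x \<in> topspace X. r `` {x} \<in> S \<inter> T} = {x \<in> topspace X. r `` {x} \<in> S} \<inter> {x \<in> topspace X. r `` {x} \<in> T}" by blast
  show "S \<inter> T \<subseteq> topspace X // r \<and> openin X {x \<in> topspace X. r `` {x} \<in> S \<inter> T}"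
    unfolding e using S T by (intro conjI openin_Int) blast+
next
  fix K assume K: "\<And>S. S \<in> K \<Longrightarrow> S \<subseteq> topspace X // r \<and> openin X {x \<in> topspace X. r `` {x} \<in> S}"
  have e: "{x \<in> topspace X. r `` {x} \<in> \<Union>K} = (\<Union>S\<in>K. {x \<in> topspace X. r `` {x} \<in> S})" by blast
  show "\<Union>K \<subseteq> topspace X // r \<and> openin X {x \<in> topspace X. r `` {x} \<in> \<Union>K}"
    unfolding e using K by (intro conjI openin_Union) blast+
qed

lemma openin_quot:
  "openin (quot_top X r) V \<longleftrightarrow> V \<subseteq> topspace X // r \<and> openin X {x \<in> topspace X. r `` {x} \<in> V}"
  unfolding quot_top_def by (simp add: topology_inverse'[OF istopology_quot])

lemma topspace_quot: "topspace (quot_top X r) = topspace X // r"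
proof
  show "topspace (quot_top X r) \<subseteq> topspace X // r"
    by (metis openin_quot openin_topspace)
  have "{x \<in> topspace X. r `` {x} \<in> topspace X // r} = topspace X"
    by (auto intro: quotientI)
  then have "openin (quot_top X r) (topspace X // r)"
    unfolding openin_quot by simp
  then show "topspace X // r \<subseteq> topspace (quot_top X r)" by (rule openin_subset)
qed

lemma cont_quot: "continuous_map X (quot_top X r) (\<lambda>x. r `` {x})"
  unfolding continuous_map_def
proof (intro conjI allI impI Pi_I)
  fix x assume "x \<in> topspace X" then show "r `` {x} \<in> topspace (quot_top X r)"
    by (simp add: topspace_quot quotientI)
next
  fix U assume "openin (quot_top X r) U"
  then show "openin X {x \<in> topspace X. r `` {x} \<in> U}" unfolding openin_quot by blast
qed

lemma cont_from_quot:
  assumes g: "continuous_map X Y g"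
    and cls: "\<And>x. x \<in> topspace X \<Longrightarrow> h (r `` {x}) = g x"
  shows "continuous_map (quot_top X r) Y h"
  unfolding continuous_map_def
proof (intro conjI allI impI Pi_I)
  fix c assume "c \<in> topspace (quot_top X r)"
  then obtain x where x: "x \<in> topspace X" "c = r `` {x}" by (auto simp: topspace_quot elim: quotientE)
  then show "h c \<in> topspace Y" using cls cm_pt[OF g] by simp
next
  fix U assume U: "openin Y U"
  have "{x \<in> topspace X. r `` {x} \<in> {c \<in> topspace (quot_top X r). h c \<in> U}} = {x \<in> topspace X. g x \<in> U}"
    using cls by (auto simp: topspace_quot intro: quotientI)
  moreover have "openin X {x \<in> topspace X. g x \<in> U}" using g U by (simp add: openin_continuous_map_preimage)
  ultimately show "openin (quot_top X r) {c \<in> topspace (quot_top X r). h c \<in> U}"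
    unfolding openin_quot by (simp add: topspace_quot)
qed



definition ht :: "real \<Rightarrow> (bool + 'a \<times> real) \<Rightarrow> real" where
  "ht l x = (case x of Inl b \<Rightarrow> (if b then l else 0) | Inr p \<Rightarrow> snd p)"

definition hgt :: "real \<Rightarrow> (bool + 'a \<times> real) set \<Rightarrow> real" where
  "hgt l c = ht l (SOME x. x \<in> c)"

lemma topspace_src:
  "topspace (glob_src Z l) = range Inl \<union> Inr ` (topspace Z \<times> {0..l})"
  by (simp add: glob_src_def topspace_disj dprod_def)

lemma Inr_src: "z \<in> topspace Z \<Longrightarrow> t \<in> {0..l} \<Longrightarrow> Inr (z,t) \<in> topspace (glob_src Z l)"
  by (simp add: topspace_src)

lemma rel_refl: "x \<in> topspace (glob_src Z l) \<Longrightarrow> x \<in> glob_rel Z l `` {x}"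
  by (simp add: glob_rel_def)

lemma ht_rel: "(x,y) \<in> glob_rel Z l \<Longrightarrow> ht l x = ht l y"
  unfolding glob_rel_def by (auto simp: ht_def)

lemma hgt_cls: "x \<in> topspace (glob_src Z l) \<Longrightarrow> hgt l (glob_rel Z l `` {x}) = ht l x"
proof -
  assume x: "x \<in> topspace (glob_src Z l)"
  then have "\<exists>y. y \<in> glob_rel Z l `` {x}" using rel_refl by blast
  then have "(SOME y. y \<in> glob_rel Z l `` {x}) \<in> glob_rel Z l `` {x}" by (rule someI_ex)
  then have "(x, SOME y. y \<in> glob_rel Z l `` {x}) \<in> glob_rel Z l" by simp
  then show ?thesis unfolding hgt_def using ht_rel by metis
qed

lemma cont_ht:
  fixes Z :: "'a topology"
  assumes l: "l > 0"
  shows "continuous_map (glob_src Z l) (interval_top l) (ht l)"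
  unfolding continuous_map_def
proof (intro conjI allI impI Pi_I)
  fix x assume "x \<in> topspace (glob_src Z l)"
  then show "ht l x \<in> topspace (interval_top l)"
    using l by (auto simp: topspace_src ht_def)
next
  fix U assume U: "openin (interval_top l) U"
  have Ul: "U \<subseteq> {0..l}" using openin_subset[OF U] by simp
  have "openin (prod_topology Z (interval_top l)) {y \<in> topspace (prod_topology Z (interval_top l)). snd y \<in> U}"
    using openin_continuous_map_preimage[OF continuous_map_snd U] .
  then have o2: "openin (dprod Z (interval_top l)) {y \<in> topspace (dprod Z (interval_top l)). ht l (Inr y) \<in> U}"
    unfolding dprod_def by (simp add: ht_def openin_imp_dk)
  have o1: "openin (discrete_topology UNIV) {x \<in> topspace (discrete_topology UNIV). ht l (Inl x :: bool + 'a \<times> real) \<in> U}"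
    by simp
  show "openin (glob_src Z l) {x \<in> topspace (glob_src Z l). ht l x \<in> U}"
    unfolding glob_src_def openin_disj
  proof (intro conjI)
    show "{x \<in> topspace (disj_union (discrete_topology UNIV) (dprod Z (interval_top l))). ht l x \<in> U}
      \<subseteq> Inl ` topspace (discrete_topology UNIV) \<union> Inr ` topspace (dprod Z (interval_top l))"
      by (auto simp: topspace_disj)
    have "{x \<in> topspace (discrete_topology UNIV). Inl x \<in> {x \<in> topspace (disj_union (discrete_topology UNIV) (dprod Z (interval_top l))). ht l x \<in> U}}
       = {x \<in> topspace (discrete_topology UNIV). ht l (Inl x :: bool + 'a \<times> real) \<in> U}"
      by (auto simp: topspace_disj)
    then show "openin (discrete_topology UNIV) {x \<in> topspace (discrete_topology UNIV). Inl x \<in> {x \<in> topspace (disj_union (discrete_topology UNIV) (dprod Z (interval_top l))). ht l x \<in> U}}"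
      by simp
    have "{y \<in> topspace (dprod Z (interval_top l)). Inr y \<in> {x \<in> topspace (disj_union (discrete_topology UNIV) (dprod Z (interval_top l))). ht l x \<in> U}}
       = {y \<in> topspace (dprod Z (interval_top l)). ht l (Inr y) \<in> U}"
      by (auto simp: topspace_disj)
    then show "openin (dprod Z (interval_top l)) {y \<in> topspace (dprod Z (interval_top l)). Inr y \<in> {x \<in> topspace (disj_union (discrete_topology UNIV) (dprod Z (interval_top l))). ht l x \<in> U}}"
      using o2 by simp
  qed
qed

lemma cont_hgt:
  assumes l: "l > 0"
  shows "continuous_map (glob_top Z l) (interval_top l) (hgt l)"
  unfolding glob_top_def
  by (rule cont_from_quot[OF cont_ht[OF l]]) (rule hgt_cls)

lemma cls_single:
  assumes z: "z \<in> topspace Z" and t: "0 < t" "t < l"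
  shows "glob_rel Z l `` {Inr (z,t)} = {Inr (z,t)}"
proof -
  have "Inr (z,t) \<in> topspace (glob_src Z l)" using z t by (simp add: Inr_src)
  then show ?thesis using t unfolding glob_rel_def by auto
qed

lemma cls_0:
  assumes z: "z \<in> topspace Z" and l: "l > 0"
  shows "glob_rel Z l `` {Inr (z,0)} = glob_rel Z l `` {Inl False}"
proof -
  have "Inr (z,0) \<in> topspace (glob_src Z l)" using z l by (simp add: Inr_src)
  moreover have "Inl False \<in> topspace (glob_src Z l)" unfolding topspace_src by blast
  ultimately show ?thesis using l unfolding glob_rel_def by auto
qed

lemma cls_1:
  assumes z: "z \<in> topspace Z" and l: "l > 0"
  shows "glob_rel Z l `` {Inr (z,l)} = glob_rel Z l `` {Inl True}"
proof -
  have "Inr (z,l) \<in> topspace (glob_src Z l)" using z l by (simp add: Inr_src)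
  moreover have "Inl True \<in> topspace (glob_src Z l)" unfolding topspace_src by blast
  ultimately show ?thesis using l unfolding glob_rel_def by auto
qed

definition Mid :: "'a topology \<Rightarrow> real \<Rightarrow> 'a set \<Rightarrow> (bool + 'a \<times> real) set set" where
  "Mid Z l V = {glob_rel Z l `` {Inr (z,t)} | z t. z \<in> V \<and> 0 < t \<and> t < l}"

lemma Mid_open:
  fixes Z :: "'a topology"
  assumes V: "openin Z V"
  shows "openin (glob_top Z l) (Mid Z l V)"
  unfolding glob_top_def openin_quot
proof (intro conjI)
  have VZ: "V \<subseteq> topspace Z" using openin_subset[OF V] .
  show "Mid Z l V \<subseteq> topspace (glob_src Z l) // glob_rel Z l"
  proof
    fix c assume "c \<in> Mid Z l V"
    then obtain z t where c: "c = glob_rel Z l `` {Inr (z,t)}" "z \<in> V" "0 < t" "t < l"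
      unfolding Mid_def by blast
    then have "Inr (z,t) \<in> topspace (glob_src Z l)" using VZ by (intro Inr_src) auto
    then show "c \<in> topspace (glob_src Z l) // glob_rel Z l" using c(1) by (simp add: quotientI)
  qed
  have eq: "{x \<in> topspace (glob_src Z l). glob_rel Z l `` {x} \<in> Mid Z l V}
      = Inr ` (V \<times> {t. 0 < t \<and> t < l})"
  proof
    show "{x \<in> topspace (glob_src Z l). glob_rel Z l `` {x} \<in> Mid Z l V} \<subseteq> Inr ` (V \<times> {t. 0 < t \<and> t < l})"
    proof
      fix x assume x: "x \<in> {x \<in> topspace (glob_src Z l). glob_rel Z l `` {x} \<in> Mid Z l V}"
      then obtain z t where zt: "glob_rel Z l `` {x} = glob_rel Z l `` {Inr (z,t)}" "z \<in> V" "0 < t" "t < l"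
        unfolding Mid_def by blast
      then have "glob_rel Z l `` {x} = {Inr (z,t)}" using cls_single[of z Z t l] VZ by auto
      moreover have "x \<in> glob_rel Z l `` {x}" using x rel_refl by blast
      ultimately have "x = Inr (z,t)" by blast
      then show "x \<in> Inr ` (V \<times> {t. 0 < t \<and> t < l})" using zt by blast
    qed
    show "Inr ` (V \<times> {t. 0 < t \<and> t < l}) \<subseteq> {x \<in> topspace (glob_src Z l). glob_rel Z l `` {x} \<in> Mid Z l V}"
    proof
      fix x :: "bool + 'a \<times> real" assume "x \<in> Inr ` (V \<times> {t. 0 < t \<and> t < l})"
      then obtain z t where zt: "x = Inr (z,t)" "z \<in> V" "0 < t" "t < l" by blast
      then have "x \<in> topspace (glob_src Z l)" using VZ by (simp add: Inr_src subsetD)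
      moreover have "glob_rel Z l `` {x} \<in> Mid Z l V" unfolding Mid_def using zt by blast
      ultimately show "x \<in> {x \<in> topspace (glob_src Z l). glob_rel Z l `` {x} \<in> Mid Z l V}" by blast
    qed
  qed
  have oI: "openin (interval_top l) ({0..l} \<inter> {0<..<l})"
    unfolding interval_top_def openin_open by (rule exI[of _ "{0<..<l}"]) simp
  have "openin (prod_topology Z (interval_top l)) (V \<times> ({0..l} \<inter> {0<..<l}))"
    using V oI by (simp add: openin_prod_Times_iff)
  then have od: "openin (dprod Z (interval_top l)) (V \<times> ({0..l} \<inter> {0<..<l}))"
    unfolding dprod_def by (rule openin_imp_dk)
  show "openin (glob_src Z l) {x \<in> topspace (glob_src Z l). glob_rel Z l `` {x} \<in> Mid Z l V}"
    unfolding eq unfolding glob_src_def openin_disj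
  proof (intro conjI)
    show "Inr ` (V \<times> {t. 0 < t \<and> t < l}) \<subseteq> Inl ` topspace (discrete_topology UNIV) \<union> Inr ` topspace (dprod Z (interval_top l))"
      using VZ by (auto simp: dprod_def)
    show "openin (discrete_topology UNIV) {x \<in> topspace (discrete_topology UNIV). Inl x \<in> Inr ` (V \<times> {t. 0 < t \<and> t < l})}"
      by simp
    have "{y \<in> topspace (dprod Z (interval_top l)). (Inr y :: bool + 'a \<times> real) \<in> Inr ` (V \<times> {t. 0 < t \<and> t < l})} = V \<times> ({0..l} \<inter> {0<..<l})"
      using VZ by (auto simp: dprod_def)
    then show "openin (dprod Z (interval_top l)) {y \<in> topspace (dprod Z (interval_top l)). (Inr y :: bool + 'a \<times> real) \<in> Inr ` (V \<times> {t. 0 < t \<and> t < l})}"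
      using od by simp
  qed
qed



lemma Gset_props:
  assumes \<phi>: "\<phi> \<in> Gset 1 l" and l: "l > 0"
  shows "continuous_map I1 (interval_top l) \<phi>" "\<phi> \<in> extensional {0..1}" "\<phi> 0 = 0" "\<phi> 1 = l"
    "\<And>t. t \<in> {0..1} \<Longrightarrow> \<phi> t \<in> {0..l}" "\<And>t. 0 < t \<Longrightarrow> t < 1 \<Longrightarrow> 0 < \<phi> t \<and> \<phi> t < l"
proof -
  have ext: "\<phi> \<in> extensional {0..1}" and mono: "mono_on {0..1} \<phi>"
    and hm: "homeomorphic_map I1 (interval_top l) \<phi>"
    using \<phi> by (auto simp: Gset_def)
  have surj: "\<phi> ` {0..1} = {0..l}" using homeomorphic_imp_surjective_map[OF hm] by simp
  have inj: "inj_on \<phi> {0..1}" using homeomorphic_imp_injective_map[OF hm] by simp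
  show "continuous_map I1 (interval_top l) \<phi>" by (rule homeomorphic_imp_continuous_map[OF hm])
  show "\<phi> \<in> extensional {0..1}" by (rule ext)
  show rng: "\<And>t. t \<in> {0..1} \<Longrightarrow> \<phi> t \<in> {0..l}" using surj by blast
  obtain t0 where t0: "t0 \<in> {0..1}" "\<phi> t0 = 0" using surj l by (metis atLeastAtMost_iff imageE less_eq_real_def order_refl)
  obtain t1 where t1: "t1 \<in> {0..1}" "\<phi> t1 = l" using surj l by (metis atLeastAtMost_iff imageE less_eq_real_def order_refl)
  have "\<phi> 0 \<le> \<phi> t0" using t0(1) by (intro mono_onD[OF mono]) auto
  moreover have "\<phi> 0 \<in> {0..l}" using rng by simp
  ultimately show p0: "\<phi> 0 = 0" using t0(2) by simp
  have "\<phi> t1 \<le> \<phi> 1" using t1(1) by (intro mono_onD[OF mono]) auto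
  moreover have "\<phi> 1 \<in> {0..l}" using rng by simp
  ultimately show p1: "\<phi> 1 = l" using t1(2) by simp
  fix t :: real assume t: "0 < t" "t < 1"
  have "\<phi> 0 \<le> \<phi> t" "\<phi> t \<le> \<phi> 1" using t by (intro mono_onD[OF mono]; auto)+
  moreover have "\<phi> t \<noteq> \<phi> 0" "\<phi> t \<noteq> \<phi> 1" using t inj unfolding inj_on_def by force+
  ultimately show "0 < \<phi> t \<and> \<phi> t < l" using p0 p1 by auto
qed

definition Fm :: "'a topology \<Rightarrow> real \<Rightarrow> (real \<Rightarrow> real) \<times> 'a \<Rightarrow> real \<Rightarrow> (bool + 'a \<times> real) set" where
  "Fm Z l = (\<lambda>(\<phi>,z). restrict (glob_delta Z l z \<circ> \<phi>) {0..1})"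

definition zof :: "(real \<Rightarrow> (bool + 'a \<times> real) set) \<Rightarrow> 'a" where
  "zof \<gamma> = fst (projr (SOME x. x \<in> \<gamma> (1/2)))"

definition Gm :: "real \<Rightarrow> (real \<Rightarrow> (bool + 'a \<times> real) set) \<Rightarrow> (real \<Rightarrow> real) \<times> 'a" where
  "Gm l \<gamma> = (restrict (\<lambda>t. hgt l (\<gamma> t)) {0..1}, zof \<gamma>)"

lemma Fm_apply: "t \<in> {0..1} \<Longrightarrow> Fm Z l (\<phi>,z) t = glob_rel Z l `` {Inr (z, \<phi> t)}"
  by (simp add: Fm_def glob_delta_def glob_pt_def)

lemma GF:
  assumes \<phi>: "\<phi> \<in> Gset 1 l" and z: "z \<in> topspace Z" and l: "l > 0"
  shows "Gm l (Fm Z l (\<phi>,z)) = (\<phi>,z)"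
proof -
  note P = Gset_props[OF \<phi> l]
  have "restrict (\<lambda>t. hgt l (Fm Z l (\<phi>,z) t)) {0..1} = \<phi>"
  proof
    fix t show "restrict (\<lambda>t. hgt l (Fm Z l (\<phi>,z) t)) {0..1} t = \<phi> t"
    proof (cases "t \<in> {0..1}")
      case True
      then have "Inr (z, \<phi> t) \<in> topspace (glob_src Z l)" using P(5) z by (simp add: Inr_src)
      then show ?thesis using True by (simp add: Fm_apply hgt_cls ht_def)
    next
      case False then show ?thesis using P(2) by (auto simp: extensional_def)
    qed
  qed
  moreover have "zof (Fm Z l (\<phi>,z)) = z"
  proof -
    have h: "(1/2::real) \<in> {0..1}" by simp
    have mid: "0 < \<phi> (1/2)" "\<phi> (1/2) < l" using P(6)[of "1/2"] by simp_all
    have "Fm Z l (\<phi>,z) (1/2) = glob_rel Z l `` {Inr (z, \<phi> (1/2))}" by (rule Fm_apply[OF h])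
    also have "\<dots> = {Inr (z, \<phi> (1/2))}" by (rule cls_single[OF z mid])
    finally have "Fm Z l (\<phi>,z) (1/2) = {Inr (z, \<phi> (1/2))}" .
    then show ?thesis by (simp add: zof_def)
  qed
  ultimately show ?thesis by (simp add: Gm_def)
qed

definition Spaths :: "'a topology \<Rightarrow> real \<Rightarrow> (real \<Rightarrow> (bool + 'a \<times> real) set) set" where
  "Spaths Z l = {\<gamma> \<in> glob_paths Z l. \<gamma> 0 = glob_pt Z l (Inl False) \<and> \<gamma> 1 = glob_pt Z l (Inl True)}"

lemma Fm_in_S:
  assumes \<phi>: "\<phi> \<in> Gset 1 l" and z: "z \<in> topspace Z" and l: "l > 0"
  shows "Fm Z l (\<phi>,z) \<in> Spaths Z l"
proof -
  note P = Gset_props[OF \<phi> l]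
  have "Fm Z l (\<phi>,z) \<in> glob_paths Z l" unfolding glob_paths_def Fm_def using \<phi> z by auto
  moreover have "Fm Z l (\<phi>,z) 0 = glob_pt Z l (Inl False)"
    using Fm_apply[of 0 Z l \<phi> z] P(3) cls_0[OF z l] by (simp add: glob_pt_def)
  moreover have "Fm Z l (\<phi>,z) 1 = glob_pt Z l (Inl True)"
    using Fm_apply[of 1 Z l \<phi> z] P(4) cls_1[OF z l] by (simp add: glob_pt_def)
  ultimately show ?thesis unfolding Spaths_def by blast
qed

lemma S_decomp:
  assumes g: "\<gamma> \<in> Spaths Z l" and l: "l > 0"
  shows "fst (Gm l \<gamma>) \<in> Gset 1 l" "snd (Gm l \<gamma>) \<in> topspace Z" "Fm Z l (Gm l \<gamma>) = \<gamma>"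
proof -
  obtain z \<phi> where zp: "\<gamma> = restrict (glob_delta Z l z \<circ> \<phi>) {0..1}" "z \<in> topspace Z" "\<phi> \<in> Gset 1 l"
    using g unfolding Spaths_def glob_paths_def by blast
  then have e: "\<gamma> = Fm Z l (\<phi>,z)" by (simp add: Fm_def)
  then have "Gm l \<gamma> = (\<phi>,z)" using GF[OF zp(3) zp(2) l] by simp
  then show "fst (Gm l \<gamma>) \<in> Gset 1 l" "snd (Gm l \<gamma>) \<in> topspace Z" "Fm Z l (Gm l \<gamma>) = \<gamma>"
    using zp e by auto
qed

lemma Mid_iff:
  assumes z: "z \<in> topspace Z" and t: "0 < t" "t < l" and V: "V \<subseteq> topspace Z"
  shows "glob_rel Z l `` {Inr (z,t)} \<in> Mid Z l V \<longleftrightarrow> z \<in> V"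
proof
  assume "glob_rel Z l `` {Inr (z,t)} \<in> Mid Z l V"
  then obtain z' t' where zt: "glob_rel Z l `` {Inr (z,t)} = glob_rel Z l `` {Inr (z',t')}" "z' \<in> V" "0 < t'" "t' < l"
    unfolding Mid_def by blast
  have "{Inr (z,t)} = {Inr (z',t')}"
    using zt cls_single[OF z t] cls_single[of z' Z t' l] V by auto
  then show "z \<in> V" using zt(2) by simp
next
  assume "z \<in> V" then show "glob_rel Z l `` {Inr (z,t)} \<in> Mid Z l V"
    unfolding Mid_def using t by blast
qed



lemma dirA:
  fixes Z :: "'a topology"
  assumes l: "l > 0"
    and \<sigma>: "continuous_map (SS p) (subtopology (delta_kelley (compact_open I1 (glob_top Z l))) (Spaths Z l)) \<sigma>"
  shows "continuous_map (SS p) (prod_topology (delta_kelley (subtopology (delta_kelley (compact_open I1 (interval_top l))) (Gset 1 l))) Z) (Gm l \<circ> \<sigma>)"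
proof -
  have \<sigma>S: "\<And>s. s \<in> standard_simplex p \<Longrightarrow> \<sigma> s \<in> Spaths Z l"
    using \<sigma> unfolding continuous_map_in_subtopology by auto
  have \<sigma>C: "continuous_map (SS p) (compact_open I1 (glob_top Z l)) \<sigma>"
    using \<sigma> unfolding continuous_map_in_subtopology by (blast intro: cont_to_dk_imp)
  have Hs: "continuous_map (prod_topology (SS p) I1) (glob_top Z l) (\<lambda>(s,t). \<sigma> s t)"
    by (rule uncurry_cont[OF \<sigma>C])
  have h1: "continuous_map (prod_topology (SS p) I1) (interval_top l) (\<lambda>x. hgt l ((\<lambda>(s,t). \<sigma> s t) x))"
    using continuous_map_compose[OF Hs cont_hgt[OF l]] by (simp add: o_def)
  have c1: "continuous_map (SS p) (compact_open I1 (interval_top l)) (\<lambda>s. restrict (\<lambda>t. hgt l (\<sigma> s t)) {0..1})"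
    using curry_cont[OF h1] by simp
  have c1': "continuous_map (SS p) (delta_kelley (subtopology (delta_kelley (compact_open I1 (interval_top l))) (Gset 1 l))) (\<lambda>s. restrict (\<lambda>t. hgt l (\<sigma> s t)) {0..1})"
  proof (rule cont_simplex_dk, rule continuous_map_into_subtopology)
    show "continuous_map (SS p) (delta_kelley (compact_open I1 (interval_top l))) (\<lambda>s. restrict (\<lambda>t. hgt l (\<sigma> s t)) {0..1})"
      by (rule cont_simplex_dk[OF c1])
    show "(\<lambda>s. restrict (\<lambda>t. hgt l (\<sigma> s t)) {0..1}) \<in> topspace (SS p) \<rightarrow> Gset 1 l"
    proof
      fix s assume "s \<in> topspace (SS p)"
      then show "restrict (\<lambda>t. hgt l (\<sigma> s t)) {0..1} \<in> Gset 1 l"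
        using S_decomp(1)[OF \<sigma>S l, of s] by (simp add: Gm_def)
    qed
  qed
  have e: "continuous_map (SS p) (glob_top Z l) (\<lambda>s. \<sigma> s (1/2))"
  proof -
    have "continuous_map (SS p) (prod_topology (SS p) I1) (\<lambda>s. (s, 1/2))"
      by (intro continuous_map_pairedI) (simp_all add: continuous_map_id)
    from continuous_map_compose[OF this Hs] show ?thesis by (simp add: o_def)
  qed
  have c2: "continuous_map (SS p) Z (\<lambda>s. zof (\<sigma> s))"
    unfolding continuous_map_def
  proof (intro conjI allI impI Pi_I)
    fix s assume "s \<in> topspace (SS p)"
    then show "zof (\<sigma> s) \<in> topspace Z" using S_decomp(2)[OF \<sigma>S l, of s] by (simp add: Gm_def)
  next
    fix V assume V: "openin Z V"
    have iff: "(zof (\<sigma> s) \<in> V) = (\<sigma> s (1/2) \<in> Mid Z l V)" if s: "s \<in> topspace (SS p)" for s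
    proof -
      have sS: "\<sigma> s \<in> Spaths Z l" using \<sigma>S s by simp
      define \<phi> where "\<phi> = fst (Gm l (\<sigma> s))"
      define z where "z = snd (Gm l (\<sigma> s))"
      have \<phi>G: "\<phi> \<in> Gset 1 l" and zZ: "z \<in> topspace Z"
        using S_decomp(1,2)[OF sS l] \<phi>_def z_def by auto
      have eq: "Fm Z l (\<phi>,z) = \<sigma> s" using S_decomp(3)[OF sS l] \<phi>_def z_def by simp
      have zof: "zof (\<sigma> s) = z" using z_def by (simp add: Gm_def)
      have mid: "0 < \<phi> (1/2)" "\<phi> (1/2) < l" using Gset_props(6)[OF \<phi>G l, of "1/2"] by simp_all
      have "\<sigma> s (1/2) = glob_rel Z l `` {Inr (z, \<phi> (1/2))}"
        using Fm_apply[of "1/2" Z l \<phi> z] eq by simp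
      then show ?thesis using Mid_iff[OF zZ mid openin_subset[OF V]] zof by simp
    qed
    have "{s \<in> topspace (SS p). zof (\<sigma> s) \<in> V} = {s \<in> topspace (SS p). \<sigma> s (1/2) \<in> Mid Z l V}"
      using iff by blast
    moreover have "openin (SS p) {s \<in> topspace (SS p). \<sigma> s (1/2) \<in> Mid Z l V}"
      by (rule openin_continuous_map_preimage[OF e Mid_open[OF V]])
    ultimately show "openin (SS p) {s \<in> topspace (SS p). zof (\<sigma> s) \<in> V}" by simp
  qed
  have "Gm l \<circ> \<sigma> = (\<lambda>s. (restrict (\<lambda>t. hgt l (\<sigma> s t)) {0..1}, zof (\<sigma> s)))"
    by (simp add: Gm_def o_def)
  then show ?thesis using continuous_map_pairedI[OF c1' c2] by simp
qed

lemma dirB: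
  fixes Z :: "'a topology"
  assumes l: "l > 0"
    and \<sigma>: "continuous_map (SS p) (prod_topology (delta_kelley (subtopology (delta_kelley (compact_open I1 (interval_top l))) (Gset 1 l))) Z) \<sigma>"
  shows "continuous_map (SS p) (subtopology (delta_kelley (compact_open I1 (glob_top Z l))) (Spaths Z l)) (Fm Z l \<circ> \<sigma>)"
proof -
  have c1: "continuous_map (SS p) (delta_kelley (subtopology (delta_kelley (compact_open I1 (interval_top l))) (Gset 1 l))) (fst \<circ> \<sigma>)"
    and c2: "continuous_map (SS p) Z (snd \<circ> \<sigma>)"
    using \<sigma> unfolding continuous_map_pairwise by auto
  have c1a: "continuous_map (SS p) (subtopology (delta_kelley (compact_open I1 (interval_top l))) (Gset 1 l)) (fst \<circ> \<sigma>)"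
    by (rule cont_to_dk_imp[OF c1])
  then have fG: "\<And>s. s \<in> standard_simplex p \<Longrightarrow> fst (\<sigma> s) \<in> Gset 1 l"
    and c1b: "continuous_map (SS p) (delta_kelley (compact_open I1 (interval_top l))) (fst \<circ> \<sigma>)"
    unfolding continuous_map_in_subtopology by auto
  have c1c: "continuous_map (SS p) (compact_open I1 (interval_top l)) (fst \<circ> \<sigma>)"
    by (rule cont_to_dk_imp[OF c1b])
  have zZ: "\<And>s. s \<in> standard_simplex p \<Longrightarrow> snd (\<sigma> s) \<in> topspace Z"
    using cm_pt[OF c2] by simp
  have \<Phi>: "continuous_map (prod_topology (SS p) I1) (interval_top l) (\<lambda>(s,t). (fst \<circ> \<sigma>) s t)"
    by (rule uncurry_cont[OF c1c])
  have zc: "continuous_map (prod_topology (SS p) I1) Z ((snd \<circ> \<sigma>) \<circ> fst)"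
    by (rule continuous_map_compose[OF continuous_map_fst c2])
  define g where "g = (\<lambda>x. (((snd \<circ> \<sigma>) \<circ> fst) x, (\<lambda>(s,t). (fst \<circ> \<sigma>) s t) x))"
  have g: "continuous_map (prod_topology (SS p) I1) (prod_topology Z (interval_top l)) g"
    unfolding g_def by (rule continuous_map_pairedI[OF zc \<Phi>])
  have g2: "continuous_map (prod_topology (SS p) I1) (dprod Z (interval_top l)) g"
    unfolding dprod_def by (rule prism_dk[OF g])
  have "continuous_map (prod_topology (SS p) I1) (glob_src Z l) (Inr \<circ> g)"
    unfolding glob_src_def by (rule continuous_map_compose[OF g2 cont_Inr])
  from continuous_map_compose[OF this cont_quot[of "glob_src Z l" "glob_rel Z l"]]
  have g3: "continuous_map (prod_topology (SS p) I1) (glob_top Z l) (\<lambda>x. glob_rel Z l `` {Inr (g x)})"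
    by (simp add: glob_top_def o_def)
  have c: "continuous_map (SS p) (compact_open I1 (glob_top Z l)) (\<lambda>s. restrict (\<lambda>t. glob_rel Z l `` {Inr (g (s,t))}) {0..1})"
    using curry_cont[OF g3] by simp
  have eq: "restrict (\<lambda>t. glob_rel Z l `` {Inr (g (s,t))}) {0..1} = (Fm Z l \<circ> \<sigma>) s" for s
  proof
    fix t show "restrict (\<lambda>t. glob_rel Z l `` {Inr (g (s,t))}) {0..1} t = (Fm Z l \<circ> \<sigma>) s t"
      by (simp add: Fm_def glob_delta_def glob_pt_def g_def case_prod_unfold)
  qed
  have "continuous_map (SS p) (delta_kelley (compact_open I1 (glob_top Z l))) (Fm Z l \<circ> \<sigma>)"
    by (rule cont_simplex_dk) (use c eq in \<open>simp add: o_def\<close>)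
  moreover have "(Fm Z l \<circ> \<sigma>) \<in> topspace (SS p) \<rightarrow> Spaths Z l"
  proof
    fix s assume "s \<in> topspace (SS p)"
    then have s: "s \<in> standard_simplex p" by simp
    have "Fm Z l (fst (\<sigma> s), snd (\<sigma> s)) \<in> Spaths Z l"
      by (rule Fm_in_S[OF fG[OF s] zZ[OF s] l])
    then show "(Fm Z l \<circ> \<sigma>) s \<in> Spaths Z l" by simp
  qed
  ultimately show ?thesis by (rule continuous_map_into_subtopology)
qed

theorem proposition2p12:
  fixes Z :: "'a topology" and l :: real
  assumes "delta_generated Z" and "l > 0"
  shows "glob_paths_between Z l (glob_pt Z l (Inl False)) (glob_pt Z l (Inl True))
           homeomorphic_space dprod (Gsp 1 l) Z"
proof -
  note l = assms(2)
  define XA where "XA = subtopology (delta_kelley (compact_open I1 (glob_top Z l))) (Spaths Z l)"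
  define XB where "XB = prod_topology (delta_kelley (subtopology (delta_kelley (compact_open I1 (interval_top l))) (Gset 1 l))) Z"
  have A: "glob_paths_between Z l (glob_pt Z l (Inl False)) (glob_pt Z l (Inl True)) = delta_kelley XA"
    unfolding glob_paths_between_def dsub_def TOP_def Spaths_def XA_def by simp
  have B: "dprod (Gsp 1 l) Z = delta_kelley XB"
    unfolding dprod_def Gsp_def dsub_def TOP_def XB_def by simp
  show ?thesis unfolding A B
  proof (rule dk_homeo[where f="Gm l" and g="Fm Z l"])
    fix p \<sigma> assume "singular_simplex p XA \<sigma>"
    then show "continuous_map (SS p) XB (Gm l \<circ> \<sigma>)"
      unfolding XA_def XB_def singular_simplex_def using dirA[OF l] by blast
  next
    fix p \<sigma> assume "singular_simplex p XB \<sigma>"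
    then show "continuous_map (SS p) XA (Fm Z l \<circ> \<sigma>)"
      unfolding XA_def XB_def singular_simplex_def using dirB[OF l] by blast
  next
    fix x assume "x \<in> topspace XA"
    then have "x \<in> Spaths Z l" unfolding XA_def by simp
    then show "Fm Z l (Gm l x) = x" by (rule S_decomp(3)[OF _ l])
  next
    fix y assume "y \<in> topspace XB"
    then obtain \<phi> z where y: "y = (\<phi>,z)" "\<phi> \<in> Gset 1 l" "z \<in> topspace Z"
      unfolding XB_def by auto
    then show "Gm l (Fm Z l y) = y" using GF[OF y(2) y(3) l] by simp
  qed
qed


end
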